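(* Let $a, b$ be positive integers with $b > 2a$, and let $T_{a,b} = \{C_{i,1} : 1 \le i \le 2a+1\} \cup \{C_{a+1,j} : 2 \le j \le b+1\}$, of size $n = 2a+b+1$. Then on the $n \times n$ board, $$\mathrm{cp}_{\mathrm{fixed}}(T_{a,b}) = \left\lceil \frac{b+1}{2a+1} \right\rceil.$$
   Context: For integers $i,j$, $C_{i,j}$ denotes the unit square cell in column $i$ and row $j$ of the integer grid (columns numbered left to right, rows numbered top to bottom). A polyomino is a finite set of cells; its size is its number of cells. For a polyomino $\mathcal{P}$ of size $n$ the board is $\mathbb{B} = \{C_{i,j} : 1 \le i,j \le n\}$. The shift of $\mathcal{P}$ by integers $(c,d)$ is $\mathcal{P}+(c,d) = \{C_{x+c,y+d} : C_{x,y} \in \mathcal{P}\}$; a fixed copy of $\mathcal{P}$ is any shift of $\mathcal{P}$ (no rotations). A set of polyominoes is a valid arrangement if each is contained in $\mathbb{B}$ and they are pairwise disjoint. A fixed packing of $\mathcal{P}$ is a set of fixed copies of $\mathcal{P}$ forming a valid arrangement such that adding any further fixed copy of $\mathcal{P}$ yields an invalid arrangement. The clumsy fixed packing number $\mathrm{cp}_{\mathrm{fixed}}(\mathcal{P})$ is the minimum number of polyominoes in a fixed packing of $\mathcal{P}$ on the $n \times n$ board. *)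

theory Defs
  imports Complex_Main
begin

text \<open>A cell C_{i,j} is the pair (i,j) of integers: column i, row j.
  A polyomino is a finite set of cells.\<close>
type_synonym cell = "int \<times> int"

definition board :: "nat \<Rightarrow> cell set" where
  "board n = {1..int n} \<times> {1..int n}"

definition shift :: "cell set \<Rightarrow> int \<Rightarrow> int \<Rightarrow> cell set" where
  "shift P c d = (\<lambda>(x, y). (x + c, y + d)) ` P"

definition fixed_copy :: "cell set \<Rightarrow> cell set \<Rightarrow> bool" where
  "fixed_copy P Q \<longleftrightarrow> (\<exists>c d. Q = shift P c d)"

definition valid_arrangement :: "nat \<Rightarrow> cell set set \<Rightarrow> bool" where
  "valid_arrangement n S \<longleftrightarrow>
     (\<forall>Q\<in>S. Q \<subseteq> board n) \<and> (\<forall>Q\<in>S. \<forall>R\<in>S. Q \<noteq> R \<longrightarrow> Q \<inter> R = {})"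

definition fixed_packing :: "nat \<Rightarrow> cell set \<Rightarrow> cell set set \<Rightarrow> bool" where
  "fixed_packing n P S \<longleftrightarrow>
     (\<forall>Q\<in>S. fixed_copy P Q) \<and> valid_arrangement n S \<and>
     (\<forall>Q. fixed_copy P Q \<and> Q \<notin> S \<longrightarrow> \<not> valid_arrangement n (insert Q S))"

definition cp_fixed :: "cell set \<Rightarrow> nat" where
  "cp_fixed P = (LEAST k. \<exists>S. fixed_packing (card P) P S \<and> card S = k)"

definition T_poly :: "nat \<Rightarrow> nat \<Rightarrow> cell set" where
  "T_poly a b = {(i, 1) | i. 1 \<le> i \<and> i \<le> 2 * int a + 1}
              \<union> {(int a + 1, j) | j. 2 \<le> j \<and> j \<le> int b + 1}"

end

theory Submission
  imports Defs
begin

lemma mem_shift: "(x,y) \<in> shift P c d \<longleftrightarrow> (x-c,y-d) \<in> P"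
  unfolding shift_def by (force simp: image_iff)

lemma mem_T: "(x,y) \<in> T_poly a b \<longleftrightarrow> (y = 1 \<and> 1 \<le> x \<and> x \<le> 2*int a+1) \<or> (x = int a+1 \<and> 2 \<le> y \<and> y \<le> int b+1)"
  unfolding T_poly_def by auto

lemma mem_ST: "(x,y) \<in> shift (T_poly a b) c d \<longleftrightarrow>
  (y = d+1 \<and> c+1 \<le> x \<and> x \<le> c+2*int a+1) \<or> (x = c+int a+1 \<and> d+2 \<le> y \<and> y \<le> d+int b+1)"
  by (auto simp: mem_shift mem_T)

lemma card_T: "card (T_poly a b) = 2*a+b+1"
proof -
  have e: "T_poly a b = (\<lambda>i. (i,1::int)) ` {1..2*int a+1} \<union> (\<lambda>j. (int a+1, j)) ` {2..int b+1}"
    unfolding T_poly_def by auto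
  have "card (T_poly a b) = card ((\<lambda>i. (i,1::int)) ` {1..2*int a+1}) + card ((\<lambda>j. (int a+1, j)) ` {2..int b+1})"
    unfolding e by (rule card_Un_disjoint) auto
  also have "\<dots> = card {1..2*int a+1} + card {2..int b+1}"
    by (subst card_image, simp add: inj_on_def)+ simp
  also have "\<dots> = 2*a+b+1" by simp
  finally show ?thesis .
qed

lemma in_board:
  assumes "0 < b"
  shows "shift (T_poly a b) c d \<subseteq> board (2*a+b+1) \<longleftrightarrow> 0 \<le> c \<and> c \<le> int b \<and> 0 \<le> d \<and> d \<le> 2*int a"
proof
  assume h: "shift (T_poly a b) c d \<subseteq> board (2*a+b+1)"
  have "(c+1,d+1) \<in> shift (T_poly a b) c d" "(c+2*int a+1,d+1) \<in> shift (T_poly a b) c d"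
     "(c+int a+1,d+int b+1) \<in> shift (T_poly a b) c d"
    using assms by (auto simp: mem_ST)
  then show "0 \<le> c \<and> c \<le> int b \<and> 0 \<le> d \<and> d \<le> 2*int a"
    using h by (auto simp: board_def)
next
  assume "0 \<le> c \<and> c \<le> int b \<and> 0 \<le> d \<and> d \<le> 2*int a"
  then show "shift (T_poly a b) c d \<subseteq> board (2*a+b+1)"
    by (auto simp: board_def mem_ST)
qed

lemma meet:
  assumes "2*a < b" "0 \<le> d" "d \<le> 2*int a" "0 \<le> d'" "d' \<le> 2*int a" "\<bar>c-c'\<bar> \<le> int a"
  shows "shift (T_poly a b) c d \<inter> shift (T_poly a b) c' d' \<noteq> {}"
proof (cases "d = d'")
  case True
  then have "(max c c' + 1, d+1) \<in> shift (T_poly a b) c d \<inter> shift (T_poly a b) c' d'"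
    using assms by (auto simp: mem_ST)
  then show ?thesis by blast
next
  case False
  show ?thesis
  proof (cases "d < d'")
    case True
    then have "(c+int a+1, d'+1) \<in> shift (T_poly a b) c d \<inter> shift (T_poly a b) c' d'"
      using assms by (auto simp: mem_ST)
    then show ?thesis by blast
  next
    case F: False
    then have "(c'+int a+1, d+1) \<in> shift (T_poly a b) c d \<inter> shift (T_poly a b) c' d'"
      using assms False by (auto simp: mem_ST)
    then show ?thesis by blast
  qed
qed

lemma meet2:
  assumes "\<bar>c-c'\<bar> \<le> 2*int a"
  shows "shift (T_poly a b) c d \<inter> shift (T_poly a b) c' d \<noteq> {}"
proof -
  have "(max c c' + 1, d+1) \<in> shift (T_poly a b) c d \<inter> shift (T_poly a b) c' d"
    using assms by (auto simp: mem_ST)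
  then show ?thesis by blast
qed

lemma apart:
  assumes "shift (T_poly a b) c d \<inter> shift (T_poly a b) c' d' \<noteq> {}"
  shows "\<bar>c-c'\<bar> \<le> int a \<or> (d = d' \<and> \<bar>c-c'\<bar> \<le> 2*int a)"
proof -
  obtain x y where "(x,y) \<in> shift (T_poly a b) c d" "(x,y) \<in> shift (T_poly a b) c' d'"
    using assms by auto
  then show ?thesis unfolding mem_ST by arith
qed

lemma shift_inj:
  assumes "shift (T_poly a b) c d = shift (T_poly a b) c' d'"
  shows "c = c' \<and> d = d'"
proof -
  have "(c+1,d+1) \<in> shift (T_poly a b) c d" "(c'+1,d'+1) \<in> shift (T_poly a b) c' d'"
    by (simp_all add: mem_ST)
  then have "(c+1,d+1) \<in> shift (T_poly a b) c' d'" "(c'+1,d'+1) \<in> shift (T_poly a b) c d"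
    using assms by simp_all
  then show ?thesis unfolding mem_ST by arith
qed

lemma nonempty_T: "shift (T_poly a b) c d \<noteq> {}"
proof -
  have "(c+1,d+1) \<in> shift (T_poly a b) c d" by (simp add: mem_ST)
  then show ?thesis by blast
qed


lemma three:
  fixes p q r x a :: int
  assumes "\<bar>p-x\<bar> > a" "\<bar>q-x\<bar> > a" "\<bar>r-x\<bar> > a"
    "\<bar>p-x\<bar> \<le> 2*a" "\<bar>q-x\<bar> \<le> 2*a" "\<bar>r-x\<bar> \<le> 2*a"
    "\<bar>p-q\<bar> > a" "\<bar>p-r\<bar> > a" "\<bar>q-r\<bar> > a"
  shows False
proof -
  consider "(p<x) = (q<x)" | "(p<x) = (r<x)" | "(q<x)=(r<x)" by blast
  then show False
  proof cases
    case 1 then show ?thesis using assms(1,2,4,5,7) by (cases "p<x"; simp add: abs_if split: if_splits; linarith)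
  next
    case 2 then show ?thesis using assms(1,3,4,6,8) by (cases "p<x"; simp add: abs_if split: if_splits; linarith)
  next
    case 3 then show ?thesis using assms(2,3,5,6,9) by (cases "q<x"; simp add: abs_if split: if_splits; linarith)
  qed
qed

lemma finite_board: "finite (board n)"
  unfolding board_def by simp

lemma lower:
  assumes a0: "0 < a" and ab: "2*a < b"
    and P: "fixed_packing (2*a+b+1) (T_poly a b) S"
  shows "int b + 1 \<le> int (card S) * (2*int a+1)"
proof -
  let ?T = "T_poly a b"
  let ?n = "2*a+b+1"
  have cp: "\<forall>Q\<in>S. fixed_copy ?T Q" and va: "valid_arrangement ?n S"
    and mx: "\<forall>Q. fixed_copy ?T Q \<and> Q \<notin> S \<longrightarrow> \<not> valid_arrangement ?n (insert Q S)"
    using P unfolding fixed_packing_def by auto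
  have sub: "\<forall>Q\<in>S. Q \<subseteq> board ?n" and dis: "\<forall>Q\<in>S. \<forall>R\<in>S. Q \<noteq> R \<longrightarrow> Q \<inter> R = {}"
    using va unfolding valid_arrangement_def by auto
  have finS: "finite S"
  proof (rule finite_subset)
    show "S \<subseteq> Pow (board ?n)" using sub by blast
    show "finite (Pow (board ?n))" using finite_board by blast
  qed
  define pos where "pos Q = (SOME p. Q = shift ?T (fst p) (snd p))" for Q
  have hQ: "Q = shift ?T (fst (pos Q)) (snd (pos Q))" if "Q \<in> S" for Q
  proof -
    have "fixed_copy ?T Q" using cp that by blast
    then obtain c d where cd: "Q = shift ?T c d" unfolding fixed_copy_def by blast
    have "Q = shift ?T (fst (c,d)) (snd (c,d))" unfolding fst_conv snd_conv by (rule cd)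
    then show ?thesis unfolding pos_def by (rule someI[where P="\<lambda>p. Q = shift ?T (fst p) (snd p)"])
  qed
  have rng: "0 \<le> fst (pos Q) \<and> fst (pos Q) \<le> int b \<and> 0 \<le> snd (pos Q) \<and> snd (pos Q) \<le> 2*int a"
    if "Q \<in> S" for Q
  proof -
    have "shift ?T (fst (pos Q)) (snd (pos Q)) \<subseteq> board ?n"
      using sub that hQ[OF that, symmetric] by simp
    then show ?thesis using in_board[of b a "fst (pos Q)" "snd (pos Q)"] ab by simp
  qed
  have cover: "{0..int b} \<subseteq> (\<Union>Q\<in>S. {fst (pos Q) - int a .. fst (pos Q) + int a})"
  proof
    fix x assume x: "x \<in> {0..int b}"
    show "x \<in> (\<Union>Q\<in>S. {fst (pos Q) - int a .. fst (pos Q) + int a})"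
    proof (rule ccontr)
      assume "\<not> ?thesis"
      then have far: "\<forall>Q\<in>S. \<bar>fst (pos Q) - x\<bar> > int a" by force
      have blk: "\<exists>R\<in>S. snd (pos R) = d' \<and> \<bar>fst (pos R) - x\<bar> \<le> 2*int a"
        if d': "0 \<le> d'" "d' \<le> 2*int a" for d'
      proof -
        let ?Q = "shift ?T x d'"
        have fc: "fixed_copy ?T ?Q" unfolding fixed_copy_def by blast
        have Qb: "?Q \<subseteq> board ?n" using in_board[of b a x d'] x d' ab by auto
        have QS: "?Q \<notin> S"
        proof
          assume "?Q \<in> S"
          then have "?Q = shift ?T (fst (pos ?Q)) (snd (pos ?Q))" by (rule hQ)
          then have "x = fst (pos ?Q) \<and> d' = snd (pos ?Q)" by (rule shift_inj)
          then have "fst (pos ?Q) = x" by simp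
          with far \<open>?Q \<in> S\<close> show False by force
        qed
        then have "\<not> valid_arrangement ?n (insert ?Q S)" using mx fc by blast
        then obtain R where R: "R \<in> S" "?Q \<inter> R \<noteq> {}"
          using Qb sub dis unfolding valid_arrangement_def by blast
        then have "?Q \<inter> shift ?T (fst (pos R)) (snd (pos R)) \<noteq> {}" using hQ[OF R(1), symmetric] by simp
        then have "\<bar>x - fst (pos R)\<bar> \<le> int a \<or> (d' = snd (pos R) \<and> \<bar>x - fst (pos R)\<bar> \<le> 2*int a)"
          by (rule apart)
        then show ?thesis using far R(1) by force
      qed
      obtain R0 where R0: "R0 \<in> S" "snd (pos R0) = 0" "\<bar>fst (pos R0) - x\<bar> \<le> 2*int a"
        using blk[of 0] by auto
      obtain R1 where R1: "R1 \<in> S" "snd (pos R1) = 1" "\<bar>fst (pos R1) - x\<bar> \<le> 2*int a"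
        using blk[of 1] a0 by auto
      obtain R2 where R2: "R2 \<in> S" "snd (pos R2) = 2" "\<bar>fst (pos R2) - x\<bar> \<le> 2*int a"
        using blk[of 2] a0 by auto
      have sep: "\<bar>fst (pos R) - fst (pos R')\<bar> > int a"
        if "R \<in> S" "R' \<in> S" "snd (pos R) \<noteq> snd (pos R')" for R R'
      proof (rule ccontr)
        assume "\<not> ?thesis"
        then have "shift ?T (fst (pos R)) (snd (pos R)) \<inter> shift ?T (fst (pos R')) (snd (pos R')) \<noteq> {}"
          using meet[of a b] ab rng that by simp
        moreover have "R \<noteq> R'" using that by auto
        moreover have "R \<inter> R' = {}" using dis that \<open>R \<noteq> R'\<close> by blast
        ultimately show False using hQ[OF that(1), symmetric] hQ[OF that(2), symmetric] by simp
      qed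
      have "\<bar>fst (pos R0) - fst (pos R1)\<bar> > int a" "\<bar>fst (pos R0) - fst (pos R2)\<bar> > int a"
        "\<bar>fst (pos R1) - fst (pos R2)\<bar> > int a"
        using sep R0 R1 R2 by auto
      moreover have "\<bar>fst (pos R0) - x\<bar> > int a" "\<bar>fst (pos R1) - x\<bar> > int a" "\<bar>fst (pos R2) - x\<bar> > int a"
        using far R0 R1 R2 by auto
      ultimately show False using R0(3) R1(3) R2(3) three by metis
    qed
  qed
  have "card {0..int b} \<le> card (\<Union>Q\<in>S. {fst (pos Q) - int a .. fst (pos Q) + int a})"
    by (rule card_mono[OF _ cover]) (use finS in auto)
  also have "\<dots> \<le> (\<Sum>Q\<in>S. card {fst (pos Q) - int a .. fst (pos Q) + int a})"
    by (rule card_UN_le[OF finS])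
  also have "\<dots> = card S * (2*a+1)" by (simp add: nat_add_distrib nat_mult_distrib)
  finally have "b + 1 \<le> card S * (2*a+1)" by simp
  then have "int (b+1) \<le> int (card S * (2*a+1))" by linarith
  then show ?thesis by (simp add: algebra_simps)
qed


lemma upper:
  assumes a0: "0 < a" and ab: "2*a < b" and K2: "K \<ge> 2"
    and Kl: "(K-1)*(2*int a+1) \<le> int b" and Ku: "int b + 1 \<le> K*(2*int a+1)"
  shows "\<exists>S. fixed_packing (2*a+b+1) (T_poly a b) S \<and> card S = nat K"
proof -
  let ?T = "T_poly a b"
  let ?n = "2*a+b+1"
  define m where "m = 2*int a+1"
  have m0: "m > 0" unfolding m_def by simp
  define cc where "cc i = min (int a + i*m) (int b)" for i :: int
  define dd where "dd i = (if i = K-1 then 1 else (0::int))" for i :: int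
  define S where "S = (\<lambda>i. shift ?T (cc i) (dd i)) ` {0..<K}"
  have Kl': "(K-1)*m \<le> int b" and Ku': "int b + 1 \<le> K*m" using Kl Ku unfolding m_def by auto
  have lowc: "cc i = int a + i*m" if "0 \<le> i" "i \<le> K-2" for i
  proof -
    have "i*m \<le> (K-2)*m" using that m0 by (intro mult_right_mono) auto
    moreover have "(K-2)*m = (K-1)*m - m" by (simp add: algebra_simps)
    ultimately have "int a + i*m \<le> int b" using Kl' unfolding m_def by linarith
    then show ?thesis unfolding cc_def by simp
  qed
  have rng: "0 \<le> cc i \<and> cc i \<le> int b \<and> 0 \<le> dd i \<and> dd i \<le> 2*int a" if "i \<in> {0..<K}" for i
  proof -
    have "0 \<le> i*m" using that m0 by simp
    then show ?thesis using a0 unfolding cc_def dd_def by auto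
  qed
  have sep: "\<not> (\<bar>cc i - cc j\<bar> \<le> int a \<or> (dd i = dd j \<and> \<bar>cc i - cc j\<bar> \<le> 2*int a))"
    if "i \<in> {0..<K}" "j \<in> {0..<K}" "i < j" for i j
  proof -
    have i: "0 \<le> i" "i \<le> K-2" using that by auto
    have ci: "cc i = int a + i*m" by (rule lowc[OF i])
    have im: "i*m \<le> (K-2)*m" using i m0 by (intro mult_right_mono) auto
    have e: "(K-2)*m = (K-1)*m - m" by (simp add: algebra_simps)
    show ?thesis
    proof (cases "j \<le> K-2")
      case True
      then have cj: "cc j = int a + j*m" using lowc that by auto
      have "(i+1)*m \<le> j*m" using that m0 by (intro mult_right_mono) auto
      then have "cc j - cc i \<ge> m" using ci cj by (simp add: algebra_simps)
      then show ?thesis unfolding m_def by auto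
    next
      case False
      then have jK: "j = K-1" using that by auto
      then have "dd j = 1" "dd i = 0" using that unfolding dd_def by auto
      moreover have "cc j - cc i > int a"
        using jK ci im e Kl' unfolding cc_def m_def by auto
      ultimately show ?thesis by auto
    qed
  qed
  have disj: "shift ?T (cc i) (dd i) \<inter> shift ?T (cc j) (dd j) = {}"
    if "i \<in> {0..<K}" "j \<in> {0..<K}" "i \<noteq> j" for i j
  proof (cases "i < j")
    case True
    then show ?thesis using sep[OF that(1,2) True] apart[of a b "cc i" "dd i" "cc j" "dd j"] by blast
  next
    case False
    then have "j < i" using that by auto
    then have "\<not> (\<bar>cc j - cc i\<bar> \<le> int a \<or> (dd j = dd i \<and> \<bar>cc j - cc i\<bar> \<le> 2*int a))"
      using sep that by blast
    then have "\<not> (\<bar>cc i - cc j\<bar> \<le> int a \<or> (dd i = dd j \<and> \<bar>cc i - cc j\<bar> \<le> 2*int a))"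
      by (simp add: abs_minus_commute eq_commute)
    then show ?thesis using apart[of a b "cc i" "dd i" "cc j" "dd j"] by blast
  qed
  have inj: "inj_on (\<lambda>i. shift ?T (cc i) (dd i)) {0..<K}"
  proof (rule inj_onI)
    fix i j assume ij: "i \<in> {0..<K}" "j \<in> {0..<K}" "shift ?T (cc i) (dd i) = shift ?T (cc j) (dd j)"
    show "i = j"
    proof (rule ccontr)
      assume "i \<noteq> j"
      then have "shift ?T (cc i) (dd i) \<inter> shift ?T (cc j) (dd j) = {}" using disj ij by blast
      then show False using ij(3) nonempty_T[of a b "cc j" "dd j"] by auto
    qed
  qed
  have cardS: "card S = nat K" unfolding S_def using card_image[OF inj] by simp
  have cover: "\<exists>i\<in>{0..<K}. \<bar>cc i - x\<bar> \<le> int a" if "0 \<le> x" "x \<le> int b" for x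
  proof (cases "x < (K-1)*m")
    case True
    define i where "i = x div m"
    have xd: "x = i*m + x mod m" unfolding i_def by simp
    have r: "0 \<le> x mod m" "x mod m < m" using m0 by auto
    have i0: "0 \<le> i" unfolding i_def using that m0 by (simp add: pos_imp_zdiv_nonneg_iff)
    have iK: "i \<le> K-2"
    proof (rule ccontr)
      assume "\<not> i \<le> K-2"
      then have "(K-1)*m \<le> i*m" using m0 by (intro mult_right_mono) auto
      then show False using True xd r by linarith
    qed
    have "cc i = int a + i*m" by (rule lowc[OF i0 iK])
    then have "cc i - x = int a - x mod m" using xd by linarith
    then have "\<bar>cc i - x\<bar> \<le> int a" using r unfolding m_def by linarith
    then show ?thesis using i0 iK by (intro bexI[of _ i]) auto
  next
    case False
    have "\<bar>cc (K-1) - x\<bar> \<le> int a"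
      using False that Ku' unfolding cc_def m_def by (auto simp: algebra_simps)
    then show ?thesis using K2 by (intro bexI[of _ "K-1"]) auto
  qed
  have "fixed_packing ?n ?T S"
    unfolding fixed_packing_def
  proof (intro conjI allI impI)
    show "\<forall>Q\<in>S. fixed_copy ?T Q" unfolding S_def fixed_copy_def by blast
    show va: "valid_arrangement ?n S"
      unfolding valid_arrangement_def
    proof (intro conjI ballI impI)
      fix Q assume "Q \<in> S"
      then obtain i where "i \<in> {0..<K}" "Q = shift ?T (cc i) (dd i)" unfolding S_def by blast
      then show "Q \<subseteq> board ?n" using in_board[of b a] rng ab by auto
    next
      fix Q R assume "Q \<in> S" "R \<in> S" "Q \<noteq> R"
      then obtain i j where "i \<in> {0..<K}" "Q = shift ?T (cc i) (dd i)" "j \<in> {0..<K}" "R = shift ?T (cc j) (dd j)"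
        unfolding S_def by blast
      then show "Q \<inter> R = {}" using disj \<open>Q \<noteq> R\<close> by blast
    qed
    fix Q assume h: "fixed_copy ?T Q \<and> Q \<notin> S"
    then obtain x d' where Q: "Q = shift ?T x d'" unfolding fixed_copy_def by blast
    show "\<not> valid_arrangement ?n (insert Q S)"
    proof
      assume v: "valid_arrangement ?n (insert Q S)"
      then have "Q \<subseteq> board ?n" unfolding valid_arrangement_def by blast
      then have xr: "0 \<le> x" "x \<le> int b" "0 \<le> d'" "d' \<le> 2*int a" using in_board[of b a x d'] ab Q by auto
      obtain i where i: "i \<in> {0..<K}" "\<bar>cc i - x\<bar> \<le> int a" using cover[OF xr(1,2)] by blast
      let ?R = "shift ?T (cc i) (dd i)"
      have RS: "?R \<in> S" unfolding S_def using i by blast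
      have "?R \<inter> Q \<noteq> {}" unfolding Q using meet[of a b "dd i" d' "cc i" x] rng[OF i(1)] xr i ab by auto
      moreover have "?R \<noteq> Q" using RS h by blast
      ultimately show False using v RS unfolding valid_arrangement_def by blast
    qed
  qed
  then show ?thesis using cardS by blast
qed


theorem theorem7:
  fixes a b :: nat
  assumes "0 < a" and "0 < b" and "b > 2 * a"
  shows "card (T_poly a b) = 2 * a + b + 1 \<and>
         int (cp_fixed (T_poly a b)) = ceiling (real (b + 1) / real (2 * a + 1))"
proof -
  define m where "m = 2*int a+1"
  define K where "K = (int b + m) div m"
  have m0: "m > 0" unfolding m_def by simp
  have dm: "int b + m = K*m + (int b + m) mod m" unfolding K_def by (rule div_mult_mod_eq[symmetric])
  have r: "0 \<le> (int b + m) mod m" "(int b + m) mod m < m" using m0 by auto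
  have Kl: "(K-1)*m \<le> int b" using dm r by (simp add: algebra_simps)
  have Ku: "int b + 1 \<le> K*m" using dm r by linarith
  have bm: "int b \<ge> m" using assms(3) unfolding m_def by linarith
  have K2: "K \<ge> 2"
  proof (rule ccontr)
    assume "\<not> K \<ge> 2"
    then have "K*m \<le> 1*m" using m0 by (intro mult_right_mono) auto
    then show False using Ku bm by linarith
  qed
  have cardT: "card (T_poly a b) = 2*a+b+1" by (rule card_T)
  have cp: "cp_fixed (T_poly a b) = nat K"
    unfolding cp_fixed_def cardT
  proof (rule Least_equality)
    show "\<exists>S. fixed_packing (2*a+b+1) (T_poly a b) S \<and> card S = nat K"
      using upper[of a b K] assms K2 Kl Ku unfolding m_def by auto
  next
    fix y assume "\<exists>S. fixed_packing (2*a+b+1) (T_poly a b) S \<and> card S = y"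
    then obtain S where S: "fixed_packing (2*a+b+1) (T_poly a b) S" "card S = y" by blast
    have yl: "int b + 1 \<le> int y * m" using lower[OF assms(1,3) S(1)] S(2) unfolding m_def by simp
    have "K \<le> int y"
    proof (rule ccontr)
      assume "\<not> K \<le> int y"
      then have "(int y + 1)*m \<le> K*m" using m0 by (intro mult_right_mono) auto
      then show False using yl dm r by (simp add: algebra_simps)
    qed
    then show "nat K \<le> y" by simp
  qed
  have ce: "ceiling (real (b + 1) / real (2 * a + 1)) = K"
  proof (rule ceiling_unique)
    have mr: "real (2*a+1) = real_of_int m" unfolding m_def by simp
    have mr0: "real (2*a+1) > 0" by simp
    have "real_of_int ((K-1)*m) < real_of_int (int b + 1)" using Kl by linarith
    then have "(real_of_int K - 1) * real (2*a+1) < real (b+1)" unfolding mr by simp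
    then show "real_of_int K - 1 < real (b + 1) / real (2 * a + 1)"
      using mr0 by (simp add: pos_less_divide_eq)
    have "real_of_int (int b + 1) \<le> real_of_int (K*m)" using Ku by linarith
    then have "real (b+1) \<le> real_of_int K * real (2*a+1)" unfolding mr by simp
    then show "real (b + 1) / real (2 * a + 1) \<le> real_of_int K"
      using mr0 by (simp add: pos_divide_le_eq)
  qed
  show ?thesis using cardT cp ce K2 by simp
qed

end
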